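(* Let $c \in (0,1]$. If $f\in\mathcal{A}$ satisfies \[ \frac{1}{3}\left(\frac{zf'(z)}{f(z)}\right)^3+\left(1+\frac{zf''(z)}{f'(z)}-\frac{zf'(z)}{f(z)}\right)\left(\frac{zf'(z)}{f(z)}\right)\prec\frac{1}{3}\left(\sqrt{1+cz}\right)^3+\frac{cz}{2\sqrt{1+cz}} \] in $\mathbb{D}$, then $f\in\mathcal{S}^*(q_c)$.
   Context: $\mathbb{D}$ is the open unit disk. $\mathcal{A}$ is the class of functions $f$ analytic in $\mathbb{D}$ with $f(0)=0$, $f'(0)=1$. For $c\in(0,1]$, $\mathcal{S}^*(q_c)$ is the class of $f\in\mathcal{A}$ with $\left|\left(\frac{zf'(z)}{f(z)}\right)^2-1\right|<c$ for all $z\in\mathbb{D}$, equivalently $\frac{zf'(z)}{f(z)}\prec\sqrt{1+cz}$ (branch with $\sqrt1=1$). For analytic $F,G$ on $\mathbb{D}$, $F\prec G$ means $F=G\circ\omega$ for some analytic $\omega:\mathbb{D}\to\mathbb{D}$ with $\omega(0)=0$. The left-hand side of the subordination is assumed analytic in $\mathbb{D}$. *)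

theory Defs
  imports "HOL-Complex_Analysis.Complex_Analysis"
begin

definition unit_disk :: "complex set" where
  "unit_disk = ball 0 1"

definition classA :: "(complex \<Rightarrow> complex) \<Rightarrow> bool" where
  "classA f \<longleftrightarrow> f holomorphic_on unit_disk \<and> f 0 = 0 \<and> deriv f 0 = 1"

definition subordinate :: "(complex \<Rightarrow> complex) \<Rightarrow> (complex \<Rightarrow> complex) \<Rightarrow> bool" where
  "subordinate F G \<longleftrightarrow>
     (\<exists>\<omega>. \<omega> holomorphic_on unit_disk \<and> \<omega> 0 = 0 \<and> \<omega> ` unit_disk \<subseteq> unit_disk \<and>
          (\<forall>z\<in>unit_disk. F z = G (\<omega> z)))"

text \<open>S*(q_c): |(z f'/f)^2 - 1| < c in the disk (at z = 0 the quotient z f'/f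
  is 1 by continuity, where the inequality holds trivially).\<close>
definition Sstar_qc :: "real \<Rightarrow> (complex \<Rightarrow> complex) \<Rightarrow> bool" where
  "Sstar_qc c f \<longleftrightarrow> classA f \<and> (\<forall>z\<in>unit_disk - {0}. f z \<noteq> 0) \<and>
     (\<forall>z\<in>unit_disk - {0}. cmod ((z * deriv f z / f z)^2 - 1) < c)"

end

theory Submission
  imports Defs
begin

lemma sector_aux:
  fixes x y :: real
  assumes "x \<ge> 0" "x*x - y*y \<ge> 0"
  shows "x + y \<ge> 0" "x - y \<ge> 0"
proof -
  have "y^2 \<le> x^2" using assms by (simp add: power2_eq_square)
  hence "\<bar>y\<bar> \<le> \<bar>x\<bar>" using abs_le_square_iff by blast
  thus "x + y \<ge> 0" "x - y \<ge> 0" using assms(1) by linarith+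
qed

lemma term1_nonneg:
  fixes s t :: complex
  assumes "Re s \<ge> 0" "Re t \<ge> 0" "Re (s^2) \<ge> 0" "Re (t^2) \<ge> 0"
  shows "Re (s * (t^2 + t * s + s^2) * cnj (t + s)) \<ge> 0"
proof -
  obtain x y where t: "t = Complex x y" by (cases t)
  obtain a b where s: "s = Complex a b" by (cases s)
  have "Re (t^2) = x*x - y*y" unfolding t by (simp add: power2_eq_square)
  hence x: "x \<ge> 0" "x*x - y*y \<ge> 0" using assms t by auto
  have "Re (s^2) = a*a - b*b" unfolding s by (simp add: power2_eq_square)
  hence a: "a \<ge> 0" "a*a - b*b \<ge> 0" using assms s by auto
  define P where "P = x + y"
  define R where "R = x - y"
  define A where "A = a + b"
  define B where "B = a - b"
  have P: "P \<ge> 0" and R: "R \<ge> 0" using sector_aux[OF x] unfolding P_def R_def by auto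
  have A: "A \<ge> 0" and B: "B \<ge> 0" using sector_aux[OF a] unfolding A_def B_def by auto
  have xy: "x = (P+R)/2" "y = (P-R)/2" "a = (A+B)/2" "b = (A-B)/2" unfolding P_def R_def A_def B_def by auto
  have eq: "Re (s * (t^2 + t * s + s^2) * cnj (t + s)) = (2*A*B^3+2*A^3*B+4*R*A*B^2+2*R^2*A*B+R^3*A+4*P*A^2*B+2*P*R*B^2+2*P*R*A^2+P*R^2*B+2*P^2*A*B+P^2*R*A+P^3*B)/4"
    unfolding t s xy by (simp add: power2_eq_square power3_eq_cube algebra_simps divide_simps)
  show ?thesis unfolding eq using P R A B by (intro divide_nonneg_pos add_nonneg_nonneg mult_nonneg_nonneg zero_le_power) auto
qed

lemma sector_mult:
  fixes s t :: complex
  assumes "Re s \<ge> 0" "Re t \<ge> 0" "Re (s^2) \<ge> 0" "Re (t^2) \<ge> 0"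
  shows "Re (s * t) \<ge> 0" "Re (s * cnj t) \<ge> 0"
proof -
  obtain x y where t: "t = Complex x y" by (cases t)
  obtain a b where s: "s = Complex a b" by (cases s)
  have "Re (t^2) = x*x - y*y" unfolding t by (simp add: power2_eq_square)
  hence x: "x \<ge> 0" "x*x - y*y \<ge> 0" using assms t by auto
  have "Re (s^2) = a*a - b*b" unfolding s by (simp add: power2_eq_square)
  hence a: "a \<ge> 0" "a*a - b*b \<ge> 0" using assms s by auto
  define P where "P = x + y"
  define R where "R = x - y"
  define A where "A = a + b"
  define B where "B = a - b"
  have P: "P \<ge> 0" and R: "R \<ge> 0" using sector_aux[OF x] unfolding P_def R_def by auto
  have A: "A \<ge> 0" and B: "B \<ge> 0" using sector_aux[OF a] unfolding A_def B_def by auto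
  have xy: "x = (P+R)/2" "y = (P-R)/2" "a = (A+B)/2" "b = (A-B)/2" unfolding P_def R_def A_def B_def by auto
  have e1: "Re (s * t) = (A*R + B*P)/2" unfolding t s xy by (simp add: algebra_simps divide_simps)
  show "Re (s * t) \<ge> 0" unfolding e1 using P R A B by (intro divide_nonneg_pos add_nonneg_nonneg mult_nonneg_nonneg) auto
  have e2: "Re (s * cnj t) = (A*P + B*R)/2" unfolding t s xy by (simp add: algebra_simps divide_simps)
  show "Re (s * cnj t) \<ge> 0" unfolding e2 using P R A B by (intro divide_nonneg_pos add_nonneg_nonneg mult_nonneg_nonneg) auto
qed

lemma key_contra:
  fixes s t :: complex and c k :: real
  assumes c: "0 < c" "c \<le> 1" and s1: "Re s \<ge> 0" and sc: "cmod (s^2 - 1) = c"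
    and t1: "Re t \<ge> 0" and tc: "cmod (t^2 - 1) < c" and k: "k \<ge> 1"
    and eq: "2 * s^4 * t + 3 * t * k * (s^2 - 1) = 2 * t^4 * s + 3 * s * (t^2 - 1)"
  shows False
proof -
  define \<sigma> where "\<sigma> = s^2 - 1"
  define \<tau> where "\<tau> = t^2 - 1"
  have "Re \<sigma> \<ge> - c" using abs_Re_le_cmod[of \<sigma>] sc unfolding \<sigma>_def by linarith
  hence s2: "Re (s^2) \<ge> 0" using c unfolding \<sigma>_def by simp
  have "Re \<tau> > - c" using abs_Re_le_cmod[of \<tau>] tc unfolding \<tau>_def by linarith
  hence t2: "Re (t^2) > 0" using c unfolding \<tau>_def by simp
  define E where "E = 2 * s * t * (t^2 + t * s + s^2) + 3 * s * t + 3"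
  have E1: "(t - s) * E = 3 * (of_real k - 1) * t * \<sigma>"
    using eq unfolding E_def \<sigma>_def by algebra
  have E2: "(\<tau> - \<sigma>) * E = 3 * (of_real k - 1) * (t * (t + s)) * \<sigma>"
  proof -
    have "(\<tau> - \<sigma>) * E = (t + s) * ((t - s) * E)" unfolding \<tau>_def \<sigma>_def by algebra
    also have "\<dots> = 3 * (of_real k - 1) * (t * (t + s)) * \<sigma>" unfolding E1 by (simp add: algebra_simps)
    finally show ?thesis .
  qed
  have sn: "cmod \<sigma> = c" using sc \<sigma>_def by simp
  define D where "D = E * cnj (t * (t + s))"
  define X where "X = \<tau> * cnj \<sigma> - of_real (c^2)"
  define r where "r = 3 * (k - 1) * (cmod (t * (t + s)))^2 * c^2"
  have r0: "r \<ge> 0" unfolding r_def using k by simp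
  have XD: "X * D = of_real r"
  proof -
    have ss: "\<sigma> * cnj \<sigma> = of_real (c^2)" by (metis complex_norm_square sn)
    have tt: "(t * (t + s)) * cnj (t * (t + s)) = of_real ((cmod (t * (t + s)))^2)" by (metis complex_norm_square)
    have "X * D = ((\<tau> - \<sigma>) * E) * cnj (t * (t + s)) * cnj \<sigma>"
      unfolding X_def D_def ss[symmetric] by (simp add: algebra_simps)
    also have "\<dots> = 3 * (of_real k - 1) * ((t * (t + s)) * cnj (t * (t + s))) * (\<sigma> * cnj \<sigma>)"
      unfolding E2 by (simp add: algebra_simps)
    also have "\<dots> = of_real r" unfolding tt ss r_def by simp
    finally show ?thesis .
  qed
  have ReX: "Re X < 0"
  proof -
    have "Re (\<tau> * cnj \<sigma>) \<le> cmod (\<tau> * cnj \<sigma>)" by (rule complex_Re_le_cmod)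
    also have "\<dots> = cmod \<tau> * c" using sn by (simp add: norm_mult)
    also have "\<dots> < c * c" using tc c unfolding \<tau>_def by simp
    finally show ?thesis unfolding X_def by (simp add: power2_eq_square)
  qed
  have ReD: "Re D > 0"
  proof -
    have T1: "Re (s * (t^2 + t * s + s^2) * cnj (t + s)) \<ge> 0"
      using term1_nonneg[OF s1 t1 s2 less_imp_le[OF t2]] .
    have T2: "Re (s * cnj (t + s)) \<ge> 0"
    proof -
      have "Re (s * cnj (t + s)) = Re (s * cnj t) + Re (s * cnj s)" by (simp add: algebra_simps)
      moreover have "Re (s * cnj t) \<ge> 0" using sector_mult[OF s1 t1 s2 less_imp_le[OF t2]] by simp
      moreover have "Re (s * cnj s) \<ge> 0" by (simp add: complex_mult_cnj)
      ultimately show ?thesis by linarith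
    qed
    have T3: "Re (t * (t + s)) > 0"
    proof -
      have "Re (t * (t + s)) = Re (t^2) + Re (s * t)" by (simp add: algebra_simps power2_eq_square)
      moreover have "Re (s * t) \<ge> 0" using sector_mult[OF s1 t1 s2 less_imp_le[OF t2]] by simp
      ultimately show ?thesis using t2 by linarith
    qed
    have tt: "t * cnj t = of_real ((cmod t)^2)" by (metis complex_norm_square)
    have "D = of_real ((cmod t)^2) * (2 * (s * (t^2 + t * s + s^2) * cnj (t + s)) + 3 * (s * cnj (t + s)))
              + 3 * cnj (t * (t + s))"
      unfolding D_def E_def tt[symmetric] by (simp add: algebra_simps power2_eq_square)
    hence "Re D = (cmod t)^2 * (2 * Re (s * (t^2 + t * s + s^2) * cnj (t + s)) + 3 * Re (s * cnj (t + s)))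
              + 3 * Re (t * (t + s))" by (simp add: algebra_simps)
    thus ?thesis using T1 T2 T3 by (smt (verit) mult_nonneg_nonneg zero_le_power2)
  qed
  have "X * D * cnj D = of_real r * cnj D" using XD by simp
  hence "X * of_real ((cmod D)^2) = of_real r * cnj D" by (metis complex_norm_square mult.assoc)
  hence "Re (X * of_real ((cmod D)^2)) = Re (of_real r * cnj D)" by simp
  hence "Re X * (cmod D)^2 = r * Re D" by simp
  moreover have "D \<noteq> 0" using ReD by auto
  hence "(cmod D)^2 > 0" by simp
  ultimately show False using ReX ReD r0
    by (smt (verit) mult_neg_pos mult_nonneg_nonneg)
qed

lemma jack:
  fixes w :: "complex \<Rightarrow> complex"
  assumes holo: "w holomorphic_on ball 0 1" and w0: "w 0 = 0"
    and z1: "z1 \<in> ball 0 1" and z1w: "1 \<le> cmod (w z1)"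
  shows "\<exists>z0 k. z0 \<in> ball 0 1 \<and> z0 \<noteq> 0 \<and> cmod (w z0) = 1 \<and>
     (\<forall>z. cmod z < cmod z0 \<longrightarrow> cmod (w z) < 1) \<and> 1 \<le> k \<and> z0 * deriv w z0 = of_real k * w z0"
proof -
  have cont: "continuous_on (ball 0 1) w" using holo holomorphic_on_imp_continuous_on by blast
  have r1: "cmod z1 < 1" using z1 by simp
  have sub1: "cball 0 (cmod z1) \<subseteq> ball 0 1" using r1 by auto
  define K where "K = cball 0 (cmod z1) \<inter> w -` {y. 1 \<le> cmod y}"
  have "closed K" unfolding K_def
    by (rule continuous_closed_preimage[OF continuous_on_subset[OF cont sub1]])
       (auto intro: closed_Collect_le continuous_intros)
  moreover have "bounded K" unfolding K_def by (meson Int_lower1 bounded_cball bounded_subset)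
  ultimately have cK: "compact K" using compact_eq_bounded_closed by blast
  have "z1 \<in> K" unfolding K_def using z1w by auto
  hence neK: "K \<noteq> {}" by auto
  obtain z0 where z0K: "z0 \<in> K" and z0min: "\<forall>y\<in>K. cmod z0 \<le> cmod y"
    using continuous_attains_inf[OF cK neK, of cmod] continuous_on_norm_id by blast
  have z0w: "1 \<le> cmod (w z0)" and z0r: "cmod z0 \<le> cmod z1" using z0K unfolding K_def by auto
  have z0nz: "z0 \<noteq> 0" using z0w w0 by auto
  define r0 where "r0 = cmod z0"
  have r0: "0 < r0" "r0 < 1" using z0nz z0r r1 unfolding r0_def by auto
  have z0B: "z0 \<in> ball 0 1" using r0 unfolding r0_def by simp
  have less: "\<forall>z. cmod z < r0 \<longrightarrow> cmod (w z) < 1"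
  proof (intro allI impI)
    fix z assume z: "cmod z < r0"
    show "cmod (w z) < 1"
    proof (rule ccontr)
      assume "\<not> cmod (w z) < 1"
      hence "z \<in> K" unfolding K_def using z z0r unfolding r0_def by auto
      thus False using z0min z unfolding r0_def by force
    qed
  qed
  have subr: "cball 0 r0 \<subseteq> ball 0 1" using r0 by auto
  have "w ` closure (ball 0 r0) \<subseteq> cball 0 1"
  proof (rule image_closure_subset)
    show "continuous_on (closure (ball 0 r0)) w" using r0 continuous_on_subset[OF cont subr] by simp
    show "closed (cball (0::complex) 1)" by simp
    show "w ` ball 0 r0 \<subseteq> cball 0 1" using less by (auto simp: less_imp_le)
  qed
  hence le: "\<forall>z. cmod z \<le> r0 \<longrightarrow> cmod (w z) \<le> 1" using r0 by (auto simp: image_subset_iff)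
  have wz0: "cmod (w z0) = 1" using le z0w unfolding r0_def by (simp add: antisym)
  define w1 where "w1 = w z0"
  have w1nz: "w1 \<noteq> 0" using wz0 unfolding w1_def by auto
  define d where "d = deriv w z0"
  have dw: "\<And>z. z \<in> ball 0 1 \<Longrightarrow> (w has_field_derivative deriv w z) (at z)"
    using holomorphic_derivI[OF holo] by auto
  define v where "v = (\<lambda>\<zeta>. w (of_real r0 * \<zeta>))"
  have vholo: "v holomorphic_on ball 0 1" unfolding v_def
  proof (rule holomorphic_on_compose_gen[where g = w and t = "ball 0 1", unfolded o_def])
    show "(*) (complex_of_real r0) holomorphic_on ball 0 1" by (intro holomorphic_intros)
    show "w holomorphic_on ball 0 1" by (rule holo)
    show "(*) (complex_of_real r0) ` ball 0 1 \<subseteq> ball 0 1"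
      using r0 by (auto simp: norm_mult) (smt (verit) mult_less_cancel_left2)
  qed
  have vsch: "\<And>\<xi>. cmod \<xi> < 1 \<Longrightarrow> cmod (v \<xi>) \<le> cmod \<xi>"
  proof -
    fix \<xi> :: complex assume "cmod \<xi> < 1"
    show "cmod (v \<xi>) \<le> cmod \<xi>"
    proof (rule Schwarz_Lemma(1)[OF vholo])
      show "v 0 = 0" unfolding v_def using w0 by simp
      show "cmod \<xi> < 1" by fact
      fix z :: complex assume "cmod z < 1"
      hence "cmod (of_real r0 * z) < r0" using r0 by (simp add: norm_mult)
      thus "cmod (v z) < 1" unfolding v_def using less by blast
    qed
  qed
  have rad: "\<And>x. 0 < x \<Longrightarrow> x < 1 \<Longrightarrow> cmod (w (of_real x * z0)) \<le> x"
  proof -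
    fix x :: real assume x: "0 < x" "x < 1"
    have "w (of_real x * z0) = v (of_real x * z0 / of_real r0)" unfolding v_def using r0 by simp
    moreover have "cmod (of_real x * z0 / of_real r0) = x" using r0 x unfolding r0_def by (simp add: norm_mult norm_divide)
    ultimately show "cmod (w (of_real x * z0)) \<le> x" using vsch x by metis
  qed
  define a where "a = z0 * d / w1"
  have Rea: "Re a \<ge> 1"
  proof (rule ccontr)
    assume "\<not> Re a \<ge> 1"
    hence neg: "Re a - 1 < 0" by simp
    define g1 where "g1 = (\<lambda>x::real. Re (w (of_real x * z0) / w1) - x)"
    have dg: "((\<lambda>\<zeta>. \<zeta> * z0) has_field_derivative z0) (at 1)" by (auto intro!: derivative_eq_intros)
    have "(w has_field_derivative d) (at (1 * z0))" using dw[OF z0B] d_def by simp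
    from DERIV_cdivide[OF DERIV_chain2[OF this dg], of w1]
    have "((\<lambda>\<zeta>. w (\<zeta> * z0) / w1) has_field_derivative (d * z0 / w1)) (at (of_real 1))" by simp
    hence "((\<lambda>x::real. w (of_real x * z0) / w1) has_vector_derivative (d * z0 / w1)) (at 1)"
      by (rule has_vector_derivative_real_field)
    from DERIV_diff[OF has_field_derivative_Re[OF this] DERIV_ident]
    have "(g1 has_real_derivative (Re (d * z0 / w1) - 1)) (at 1)"
      unfolding g1_def by simp
    moreover have "Re (d * z0 / w1) - 1 = Re a - 1" unfolding a_def by (simp add: mult.commute)
    ultimately have der: "(g1 has_real_derivative (Re a - 1)) (at 1)" by simp
    obtain \<delta> where \<delta>: "\<delta> > 0" "\<forall>h>0. h < \<delta> \<longrightarrow> g1 1 < g1 (1 - h)"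
      using DERIV_neg_dec_left[OF der neg] by blast
    define h where "h = min (\<delta>/2) (1/2)"
    have h: "0 < h" "h < \<delta>" "h < 1" using \<delta> unfolding h_def by auto
    have "g1 1 = 0" unfolding g1_def using w1nz w1_def by simp
    hence "0 < g1 (1 - h)" using \<delta> h by auto
    moreover have "g1 (1 - h) \<le> 0"
    proof -
      have "Re (w (of_real (1-h) * z0) / w1) \<le> cmod (w (of_real (1-h) * z0) / w1)" by (rule complex_Re_le_cmod)
      also have "\<dots> = cmod (w (of_real (1-h) * z0))" using wz0 unfolding w1_def by (simp add: norm_divide)
      also have "\<dots> \<le> 1 - h" using rad[of "1-h"] h by simp
      finally show ?thesis unfolding g1_def by simp
    qed
    ultimately show False by simp
  qed
  have Ima: "Im a = 0"
  proof -
    define g2 where "g2 = (\<lambda>x::real. Re (w (exp (\<i> * of_real x) * z0) / w1))"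
    have dg: "((\<lambda>\<zeta>. exp (\<i> * \<zeta>) * z0) has_field_derivative (\<i> * exp (\<i> * of_real 0) * z0)) (at 0)"
      by (auto intro!: derivative_eq_intros)
    have "(w has_field_derivative d) (at (exp (\<i> * 0) * z0))" using dw[OF z0B] d_def by simp
    from DERIV_cdivide[OF DERIV_chain2[OF this dg], of w1]
    have "((\<lambda>\<zeta>. w (exp (\<i> * \<zeta>) * z0) / w1) has_field_derivative (d * (\<i> * exp (\<i> * of_real 0) * z0) / w1)) (at (of_real 0))" by simp
    hence "((\<lambda>x::real. w (exp (\<i> * of_real x) * z0) / w1) has_vector_derivative (d * (\<i> * exp (\<i> * of_real 0) * z0) / w1)) (at 0)"
      by (rule has_vector_derivative_real_field)
    from has_field_derivative_Re[OF this]
    have der2: "(g2 has_real_derivative Re (d * (\<i> * exp (\<i> * of_real 0) * z0) / w1)) (at 0)"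
      unfolding g2_def by simp
    have mx: "\<forall>y. \<bar>0 - y\<bar> < 1 \<longrightarrow> g2 y \<le> g2 0"
    proof (intro allI impI)
      fix y :: real
      have "g2 y \<le> cmod (w (exp (\<i> * of_real y) * z0) / w1)" unfolding g2_def by (rule complex_Re_le_cmod)
      also have "\<dots> = cmod (w (exp (\<i> * of_real y) * z0))" using wz0 unfolding w1_def by (simp add: norm_divide)
      also have "\<dots> \<le> 1" using le unfolding r0_def by (simp add: norm_mult)
      also have "1 = g2 0" unfolding g2_def using w1nz w1_def by simp
      finally show "g2 y \<le> g2 0" .
    qed
    have "Re (d * (\<i> * exp (\<i> * of_real 0) * z0) / w1) = 0"
      by (rule DERIV_local_max[OF der2 zero_less_one mx])
    moreover have "Re (d * (\<i> * exp (\<i> * of_real 0) * z0) / w1) = - Im a"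
    proof -
      have "d * (\<i> * exp (\<i> * of_real 0) * z0) / w1 = \<i> * a" unfolding a_def by (simp add: field_simps)
      thus ?thesis by simp
    qed
    ultimately show ?thesis by simp
  qed
  have aeq: "a = of_real (Re a)" using Ima by (simp add: complex_eq_iff)
  have "z0 * deriv w z0 = a * w z0" unfolding a_def d_def w1_def using w1nz w1_def by simp
  hence "z0 * deriv w z0 = of_real (Re a) * w z0" using aeq by simp
  thus ?thesis using z0B z0nz wz0 less Rea unfolding r0_def by blast
qed

theorem corollary2p9:
  fixes c :: real and f :: "complex \<Rightarrow> complex"
  assumes c: "0 < c" "c \<le> 1"
    and fA: "classA f"
    and fnz: "\<forall>z\<in>unit_disk - {0}. f z \<noteq> 0"
    and F_hol: "F holomorphic_on unit_disk"
    and F_eq: "\<forall>z\<in>unit_disk - {0}.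
        F z = (1/3) * (z * deriv f z / f z) ^ 3
              + (z * deriv f z / f z)
              + z ^ 2 * deriv (deriv f) z / f z
              - (z * deriv f z / f z) ^ 2"
    and sub: "subordinate F (\<lambda>z. (1/3) * (csqrt (1 + of_real c * z)) ^ 3
                               + of_real c * z / (2 * csqrt (1 + of_real c * z)))"
  shows "Sstar_qc c f"
proof -
  have fholo: "f holomorphic_on ball 0 1" and f0: "f 0 = 0" and df0: "deriv f 0 = 1"
    using fA unfolding classA_def unit_disk_def by auto
  have fnz': "\<And>z. z \<in> ball 0 1 \<Longrightarrow> z \<noteq> 0 \<Longrightarrow> f z \<noteq> 0" using fnz unfolding unit_disk_def by auto
  define g where "g = (\<lambda>z. if z = 0 then deriv f 0 else (f z - f 0) / (z - 0))"
  have gholo: "g holomorphic_on ball 0 1" unfolding g_def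
    by (rule pole_lemma[OF fholo]) simp
  have gnz: "\<And>z. z \<in> ball 0 1 \<Longrightarrow> g z \<noteq> 0"
    unfolding g_def using df0 f0 fnz' by auto
  have df_holo: "deriv f holomorphic_on ball 0 1" by (rule holomorphic_deriv[OF fholo]) simp
  define p where "p = (\<lambda>z. deriv f z / g z)"
  have pholo: "p holomorphic_on ball 0 1" unfolding p_def
    using df_holo gholo gnz fholo by (intro holomorphic_intros) auto
  have p0: "p 0 = 1" unfolding p_def g_def using df0 by simp
  have peq: "\<And>z. z \<noteq> 0 \<Longrightarrow> p z = z * deriv f z / f z"
    unfolding p_def g_def using f0 by simp
  define w where "w = (\<lambda>z. (p z ^ 2 - 1) / of_real c)"
  have wholo: "w holomorphic_on ball 0 1" unfolding w_def using pholo c by (intro holomorphic_intros) auto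
  have w0: "w 0 = 0" unfolding w_def using p0 by simp
  have cw: "\<And>z. cmod (p z ^ 2 - 1) = c * cmod (w z)"
    unfolding w_def using c by (simp add: norm_divide)
  have main: "\<forall>z\<in>ball 0 1. cmod (w z) < 1"
  proof (rule ccontr)
    assume "\<not> (\<forall>z\<in>ball 0 1. cmod (w z) < 1)"
    then obtain z1 where z1: "z1 \<in> ball 0 1" "1 \<le> cmod (w z1)" by (auto simp: not_less)
    obtain z0 k where z0: "z0 \<in> ball 0 1" "z0 \<noteq> 0" "cmod (w z0) = 1"
      and inside: "\<forall>z. cmod z < cmod z0 \<longrightarrow> cmod (w z) < 1" and k: "1 \<le> k"
      and jk: "z0 * deriv w z0 = of_real k * w z0"
      using jack[OF wholo w0 z1] by blast
    define s where "s = p z0"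
    have sc: "cmod (s^2 - 1) = c" unfolding s_def using cw[of z0] z0 by simp
    define r0 where "r0 = cmod z0"
    have r0: "0 < r0" "r0 < 1" using z0 unfolding r0_def by auto
    have subr: "cball 0 r0 \<subseteq> ball 0 1" using r0 by auto
    have pcont: "continuous_on (ball 0 1) p" using pholo holomorphic_on_imp_continuous_on by blast
    have Repos: "\<forall>z\<in>ball 0 r0. Re (p z) > 0"
    proof -
      have nz: "Re (p z) \<noteq> 0" if "z \<in> ball 0 r0" for z
      proof
        assume re0: "Re (p z) = 0"
        have "cmod (w z) < 1" using inside that unfolding r0_def by simp
        hence "cmod (p z ^ 2 - 1) < c" using cw[of z] c by simp
        hence "Re (1 - p z ^ 2) < c" using complex_Re_le_cmod[of "1 - p z ^ 2"]
          by (metis norm_minus_commute order_le_less_trans)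
        moreover have "Re (p z ^ 2) = - (Im (p z) * Im (p z))" using re0 by (simp add: power2_eq_square)
        ultimately show False using c by simp (smt (verit) zero_le_square)
      qed
      have bsub: "ball 0 r0 \<subseteq> ball 0 1" using r0 by auto
      have "connected ((\<lambda>z. Re (p z)) ` ball 0 r0)"
        by (rule connected_continuous_image)
           (auto intro!: continuous_intros continuous_on_subset[OF pcont bsub])
      hence conn: "\<forall>x\<in>(\<lambda>z. Re (p z)) ` ball 0 r0. \<forall>y\<in>(\<lambda>z. Re (p z)) ` ball 0 r0. \<forall>z. x \<le> z \<longrightarrow> z \<le> y \<longrightarrow> z \<in> (\<lambda>z. Re (p z)) ` ball 0 r0"
        using connected_iff_interval by blast
      have one: "1 \<in> (\<lambda>z. Re (p z)) ` ball 0 r0" proof (rule image_eqI[where x = 0])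
        show "1 = Re (p 0)" using p0 by simp
        show "0 \<in> ball (0::complex) r0" using r0 by simp
      qed
      show ?thesis
      proof
        fix z :: complex assume z: "z \<in> ball 0 r0"
        show "Re (p z) > 0"
        proof (rule ccontr)
          assume "\<not> Re (p z) > 0"
          hence "Re (p z) \<le> 0" by simp
          with conn one z have "0 \<in> (\<lambda>z. Re (p z)) ` ball 0 r0" by fastforce
          thus False using nz by auto
        qed
      qed
    qed
    have "p ` closure (ball 0 r0) \<subseteq> {z. Re z \<ge> 0}"
    proof (rule image_closure_subset)
      show "continuous_on (closure (ball 0 r0)) p" using r0 continuous_on_subset[OF pcont subr] by simp
      show "closed {z. Re z \<ge> 0}" by (rule closed_halfspace_Re_ge)
      show "p ` ball 0 r0 \<subseteq> {z. Re z \<ge> 0}" using Repos by (auto simp: less_imp_le)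
    qed
    moreover have "z0 \<in> closure (ball 0 r0)" using r0 unfolding r0_def by simp
    ultimately have s1: "Re s \<ge> 0" unfolding s_def by blast
    have z0D: "z0 \<in> ball 0 1 - {0}" using z0 by simp
    have oD: "open (ball (0::complex) 1 - {0})" by (simp add: open_Diff)
    have fz0: "f z0 \<noteq> 0" using fnz' z0 by auto
    define f1 where "f1 = deriv f z0"
    define f2 where "f2 = deriv (deriv f) z0"
    define Dp where "Dp = ((f1 + z0 * f2) * f z0 - z0 * f1 * f1) / (f z0)^2"
    have hf: "(f has_field_derivative f1) (at z0)" unfolding f1_def using holomorphic_derivI[OF fholo _ z0(1)] by simp
    have hdf: "(deriv f has_field_derivative f2) (at z0)" unfolding f2_def using holomorphic_derivI[OF df_holo _ z0(1)] by simp
    have "((\<lambda>z. z * deriv f z / f z) has_field_derivative Dp) (at z0)"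
      unfolding Dp_def using hf hdf fz0
      by (auto intro!: derivative_eq_intros simp: f1_def power2_eq_square)
    hence hp: "(p has_field_derivative Dp) (at z0)"
      by (rule has_field_derivative_transform_within_open[OF _ oD z0D]) (simp add: peq)
    have dp: "deriv p z0 = Dp" using hp by (rule DERIV_imp_deriv)
    have hw: "(w has_field_derivative (2 * s * Dp / of_real c)) (at z0)"
      unfolding w_def s_def using hp c by (auto intro!: derivative_eq_intros simp: power2_eq_square)
    have dw: "deriv w z0 = 2 * s * Dp / of_real c" using hw by (rule DERIV_imp_deriv)
    define P' where "P' = z0 * Dp"
    have wz0: "w z0 = (s^2 - 1) / of_real c" unfolding w_def s_def by simp
    have e2: "2 * s * P' = of_real k * (s^2 - 1)"
      using jk c unfolding dw wz0 P'_def by (simp add: field_simps)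
    have sz: "s = z0 * f1 / f z0" unfolding s_def f1_def using peq z0 by simp
    have FP: "F z0 = s^3 / 3 + P'"
    proof -
      have "F z0 = (1/3) * s ^ 3 + s + z0 ^ 2 * f2 / f z0 - s ^ 2"
        using F_eq z0D unfolding unit_disk_def sz f1_def f2_def by simp
      also have "\<dots> = s^3 / 3 + P'" unfolding P'_def Dp_def sz using fz0
        by (simp add: field_simps power2_eq_square power3_eq_cube)
      finally show ?thesis .
    qed
    obtain \<omega> where om: "\<omega> ` unit_disk \<subseteq> unit_disk"
      and Fom: "\<forall>z\<in>unit_disk. F z = (1/3) * (csqrt (1 + of_real c * \<omega> z)) ^ 3
                               + of_real c * \<omega> z / (2 * csqrt (1 + of_real c * \<omega> z))"
      using sub unfolding subordinate_def by blast
    define u where "u = \<omega> z0"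
    have "\<omega> z0 \<in> ball 0 1" using om z0(1) unfolding unit_disk_def by blast
    hence u: "cmod u < 1" unfolding u_def by simp
    define t where "t = csqrt (1 + of_real c * u)"
    have t2: "t^2 = 1 + of_real c * u" unfolding t_def by simp
    have t1: "Re t \<ge> 0" unfolding t_def by (rule Re_csqrt)
    have tc: "cmod (t^2 - 1) < c" unfolding t2 using u c by (simp add: norm_mult)
    have tnz: "t \<noteq> 0"
    proof
      assume "t = 0"
      hence "1 + of_real c * u = 0" using t2 by simp
      hence "of_real c * u = -1" by (metis add.commute add_eq_0_iff)
      hence "cmod (of_real c * u) = 1" by simp
      moreover have "c * cmod u < 1 * 1" by (rule mult_le_less_imp_less) (use u c in auto)
      ultimately show False using c by (simp add: norm_mult)
    qed
    have Ft0: "F z0 = (1/3) * t^3 + of_real c * u / (2 * t)"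
      using Fom z0(1) unfolding unit_disk_def t_def u_def by auto
    have cu: "of_real c * u = t^2 - 1" using t2 by simp
    have Ft: "F z0 = t^3 / 3 + (t^2 - 1) / (2 * t)"
      using Ft0 unfolding cu by simp
    have e1: "s^3 / 3 + P' = t^3 / 3 + (t^2 - 1) / (2 * t)" using FP Ft by simp
    hence "6 * t * (s^3 / 3 + P') = 6 * t * (t^3 / 3 + (t^2 - 1) / (2 * t))" by (simp only:)
    moreover have "6 * t * (s^3 / 3 + P') = 2 * t * s^3 + 6 * t * P'" by (simp add: algebra_simps)
    moreover have "6 * t * (t^3 / 3 + (t^2 - 1) / (2 * t)) = 2 * t^4 + 3 * (t^2 - 1)"
    proof -
      define X where "X = (t^2 - 1) / (2 * t)"
      have X: "2 * t * X = t^2 - 1" unfolding X_def using tnz by simp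
      have "6 * t * (t^3 / 3 + X) = 2 * (t * t^3) + 3 * (2 * t * X)"
        by (simp add: algebra_simps)
      also have "\<dots> = 2 * t^4 + 3 * (t^2 - 1)" unfolding X by (simp add: power4_eq_xxxx power3_eq_cube)
      finally show ?thesis unfolding X_def .
    qed
    ultimately have e1': "2 * t * s^3 + 6 * t * P' = 2 * t^4 + 3 * (t^2 - 1)" by simp
    have eq: "2 * s^4 * t + 3 * t * of_real k * (s^2 - 1) = 2 * t^4 * s + 3 * s * (t^2 - 1)"
      using e1' e2 by algebra
    show False by (rule key_contra[OF c s1 sc t1 tc k eq])
  qed
  show ?thesis unfolding Sstar_qc_def
  proof (intro conjI ballI)
    show "classA f" by (rule fA)
    fix z assume z: "z \<in> unit_disk - {0}"
    show "f z \<noteq> 0" using fnz z by auto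
  next
    fix z assume z: "z \<in> unit_disk - {0}"
    have "cmod (w z) < 1" using main z unfolding unit_disk_def by auto
    hence "cmod (p z ^ 2 - 1) < c" using cw[of z] c by simp
    thus "cmod ((z * deriv f z / f z)^2 - 1) < c" using peq z by simp
  qed
qed

end
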